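(* For every integer $s\ge4$, $F_{s,5}(x)=\frac{1}{(s-1)!}\bigl(x^2-(12s-5)x+12s^2\bigr)(x-2s)\prod_{p=5}^{s}(x-p)$ (an empty product equals $1$).
   Context: For an integer $j\ge0$, $\binom{x}{j}=x(x-1)\cdots(x-j+1)/j!$ as a polynomial in $x$, and $\binom{x}{j}=0$ for $j<0$. For integers $s\ge1$, $k\ge1$, the Moser polynomial is $F_{s,k}(x)=\sum_{p=1}^{s}(-1)^{p-1}p^{k-1}\binom{x}{s-p}$. *)

theory Defs
  imports "HOL-Computational_Algebra.Polynomial"
begin

definition binom_poly :: "int \<Rightarrow> rat poly" where
  "binom_poly j = (if j < 0 then 0
     else smult (1 / fact (nat j)) (\<Prod>i<nat j. [:- of_nat i, 1:]))"

definition moser_poly :: "nat \<Rightarrow> nat \<Rightarrow> rat poly" where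
  "moser_poly s k = (\<Sum>p=1..s. smult ((-1) ^ (p - 1) * of_nat p ^ (k - 1))
                                     (binom_poly (int s - int p)))"

end

theory Submission
  imports Defs
begin

definition ff :: "nat \<Rightarrow> rat \<Rightarrow> rat" where
  "ff s x = (\<Sum>p=1..s. (-1) ^ (p - 1) * of_nat p ^ 4 * (x gchoose (s - p)))"

definition QQ :: "nat \<Rightarrow> rat \<Rightarrow> rat" where
  "QQ s x = x^2 - (12 * of_nat s - 5) * x + 12 * of_nat s ^ 2"

definition PP :: "nat \<Rightarrow> rat \<Rightarrow> rat" where
  "PP s x = (\<Prod>p\<in>{5..s}. x - of_nat p)"

definition rr :: "nat \<Rightarrow> rat \<Rightarrow> rat" where
  "rr s x = QQ s x * (x - 2 * of_nat s) * PP s x / fact (s - 1)"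

lemma poly_binom: "j \<ge> 0 \<Longrightarrow> poly (binom_poly j) x = x gchoose (nat j)"
  by (simp add: binom_poly_def gbinomial_prod_rev poly_prod atLeast0LessThan)

lemma poly_moser: "poly (moser_poly s 5) x = ff s x"
  unfolding moser_poly_def ff_def poly_sum
  by (intro sum.cong refl) (auto simp: poly_binom nat_diff_distrib)

lemma poly_rhs: "poly (smult (1 / fact (s - 1))
      ([: 12 * of_nat s ^ 2, - (12 * of_nat s - 5), 1 :]
       * [: - (2 * of_nat s), 1 :]
       * (\<Prod>p\<in>{5..s}. [: - of_nat p, 1 :]))) x = rr s x"
  by (simp add: rr_def QQ_def PP_def poly_prod field_simps power2_eq_square)

lemma ff_step: "ff (Suc n) (x + 1) = ff (Suc n) x + ff n x"
proof -
  have "ff (Suc n) y = (\<Sum>p=1..n. (-1) ^ (p - 1) * of_nat p ^ 4 * (y gchoose (Suc (n - p))))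
         + (-1) ^ n * of_nat (Suc n) ^ 4" for y
    unfolding ff_def by (simp add: Suc_diff_le)
  moreover have "(\<Sum>p=1..n. (-1) ^ (p - 1) * of_nat p ^ 4 * ((x+1) gchoose (Suc (n - p))))
     = (\<Sum>p=1..n. (-1) ^ (p - 1) * of_nat p ^ 4 * (x gchoose (Suc (n - p))))
       + ff n x"
    unfolding ff_def sum.distrib[symmetric]
    by (intro sum.cong refl) (simp only: gbinomial_Suc_Suc distrib_left Suc_diff_le)
  ultimately show ?thesis by simp
qed

lemma PP_Suc: "n \<ge> 4 \<Longrightarrow> PP (Suc n) x = (x - of_nat (Suc n)) * PP n x"
  unfolding PP_def by (subst atLeastAtMostSuc_conv) auto

lemma PP_shift: "n \<ge> 4 \<Longrightarrow> PP (Suc n) (x + 1) = (x - 4) * PP n x"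
proof (induction n rule: nat_induct_at_least)
  case base
  then show ?case by (simp add: PP_def)
next
  case (Suc n)
  have "PP (Suc (Suc n)) (x + 1) = (x + 1 - of_nat (Suc (Suc n))) * PP (Suc n) (x+1)"
    using PP_Suc[of "Suc n" "x+1"] Suc by simp
  also have "\<dots> = (x - of_nat (Suc n)) * ((x - 4) * PP n x)" using Suc by simp
  also have "\<dots> = (x - 4) * PP (Suc n) x" using PP_Suc[of n x] Suc by simp
  finally show ?case .
qed

lemma PP_zero: "n \<ge> 4 \<Longrightarrow> PP n 0 = (-1) ^ (n - 4) * fact n / 24"
proof (induction n rule: nat_induct_at_least)
  case base
  then show ?case by (simp add: PP_def fact_numeral)
next
  case (Suc n)
  have "PP (Suc n) 0 = - of_nat (Suc n) * PP n 0" using PP_Suc[of n 0] Suc(1) by simp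
  also have "\<dots> = (-1) ^ (Suc n - 4) * fact (Suc n) / 24"
  proof -
    obtain k where k: "n = k + 4" using Suc(1) by (metis add.commute le_Suc_ex)
    have kk: "k + 5 = Suc (k+4)" by simp
    have "fact (k+5) = of_nat (k+5) * (fact (k+4)::rat)" unfolding kk fact_Suc by simp
    then show ?thesis using Suc.IH unfolding k by (simp add: algebra_simps)
  qed
  finally show ?case .
qed

lemma rr_step: "n \<ge> 4 \<Longrightarrow> rr (Suc n) (x + 1) = rr (Suc n) x + rr n x"
proof -
  assume n: "n \<ge> 4"
  obtain m where m: "n = Suc m" using n by (cases n) auto
  have F: "(fact n :: rat) = of_nat n * fact m" using m by simp
  have id: "QQ (Suc n) (x+1) * (x - 2*of_nat n - 1) * (x - 4)
     = QQ (Suc n) x * (x - 2*of_nat n - 2) * (x - of_nat n - 1) + of_nat n * QQ n x * (x - 2 * of_nat n)"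
    by (simp add: QQ_def algebra_simps power2_eq_square)
  have e: "x + 1 - 2 * of_nat (Suc n) = x - 2*of_nat n - 1" by simp
  have "rr (Suc n) (x + 1) = QQ (Suc n) (x+1) * (x - 2*of_nat n - 1) * (x - 4) * PP n x / fact n"
    unfolding rr_def PP_shift[OF n] e by (simp add: mult.assoc mult.commute mult.left_commute)
  also have "\<dots> = (QQ (Suc n) x * (x - 2*of_nat n - 2) * (x - of_nat n - 1) + of_nat n * QQ n x * (x - 2 * of_nat n)) * PP n x / fact n"
    by (simp only: id)
  also have "\<dots> = rr (Suc n) x + rr n x"
  proof -
    have F2: "(fact (n - 1)::rat) = fact n / of_nat n" using m by simp
    show ?thesis unfolding rr_def PP_Suc[OF n] diff_Suc_1 F2 using n by (simp add: field_simps)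
  qed
  finally show ?thesis .
qed

lemma ff_zero: "n \<ge> 4 \<Longrightarrow> ff n 0 = rr n 0"
proof -
  assume n: "n \<ge> 4"
  have "ff n 0 = (\<Sum>p\<in>{n}. (-1) ^ (p - 1) * of_nat p ^ 4 * ((0::rat) gchoose (n - p)))"
    unfolding ff_def using n by (intro sum.mono_neutral_right) (auto simp: gbinomial_0_left)
  also have "\<dots> = (-1) ^ (n - 1) * of_nat n ^ 4" by simp
  finally have a: "ff n 0 = (-1) ^ (n - 1) * of_nat n ^ 4" .
  obtain k where k: "n = k + 4" using n by (metis add.commute le_Suc_ex)
  have F2: "(fact (n - 1)::rat) = fact n / of_nat n" using k by (simp add: fact_reduce)
  have "rr n 0 = 12 * of_nat n ^ 2 * (- 2 * of_nat n) * ((-1) ^ (n - 4) * fact n / 24) / (fact n / of_nat n)"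
    unfolding rr_def QQ_def PP_zero[OF n] F2 by simp
  also have "\<dots> = (-1) ^ (n - 1) * of_nat n ^ 4"
  proof -
    have "n - 1 = Suc (Suc (Suc (n - 4)))" using k by simp
    then show ?thesis using k by (simp add: field_simps power2_eq_square power4_eq_xxxx power_add)
  qed
  finally show ?thesis using a by simp
qed

lemma base4: "ff 4 x = rr 4 x"
  by (simp add: ff_def rr_def QQ_def PP_def gbinomial_prod_rev numeral_eq_Suc
      atLeast0LessThan fact_numeral field_simps power2_eq_square)

lemma main_nat: "n \<ge> 4 \<Longrightarrow> ff n (of_nat x) = rr n (of_nat x)"
proof (induction n arbitrary: x rule: nat_induct_at_least)
  case base
  then show ?case by (simp add: base4)
next
  case (Suc n)
  note IH = Suc.IH
  note n4 = Suc.hyps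
  show ?case
  proof (induction x)
    case 0
    then show ?case using ff_zero[of "Suc n"] n4 by simp
  next
    case (Suc x)
    have "ff (Suc n) (of_nat x + 1) = rr (Suc n) (of_nat x + 1)"
      using ff_step[of n "of_nat x"] rr_step[of n "of_nat x"] IH[of x] Suc.IH n4 by simp
    then show ?case by (simp add: add.commute)
  qed
qed

theorem mainTheorem8:
  fixes s :: nat
  assumes "s \<ge> 4"
  shows "moser_poly s 5 =
    smult (1 / fact (s - 1))
      ([: 12 * of_nat s ^ 2, - (12 * of_nat s - 5), 1 :]
       * [: - (2 * of_nat s), 1 :]
       * (\<Prod>p\<in>{5..s}. [: - of_nat p, 1 :]))" (is "?L = ?R")
proof -
  have sub: "range (of_nat :: nat \<Rightarrow> rat) \<subseteq> {x. poly (?L - ?R) x = 0}"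
  proof
    fix y assume "y \<in> range (of_nat :: nat \<Rightarrow> rat)"
    then obtain x where "y = of_nat x" by auto
    then show "y \<in> {x. poly (?L - ?R) x = 0}"
      by (simp only: mem_Collect_eq poly_diff poly_moser poly_rhs main_nat[OF assms] diff_self)
  qed
  have "infinite (range (of_nat :: nat \<Rightarrow> rat))"
    by (intro range_inj_infinite) (simp add: inj_on_def)
  hence "infinite {x. poly (?L - ?R) x = 0}" using sub finite_subset by blast
  hence "?L - ?R = 0" using poly_roots_finite by blast
  thus ?thesis by simp
qed

end
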